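(* Fix a real number $z\geq 2$. The function $q\mapsto\beta_c(q,z)$ (defined for integers $q\geq 2$) is increasing.
   Context: For an integer $q\geq 2$, real $z\geq 2$, $\beta\geq0$ and $N\in\mathbb{N}$, the generalized mean-field Potts measure is $\pi^N_{\beta,q,z}(\xi)=\frac{1}{Z}\exp\big(\frac{N\beta}{z}\sum_{i=1}^q (L_N^\xi(i))^z\big)$ on $\{1,\dots,q\}^N$, with $L_N^\xi=\frac1N\sum_{j=1}^N\delta_{\xi_j}$ the empirical distribution. The critical inverse temperature $\beta_c(q,z)>0$ is the (unique) value such that the weak limit of $\pi^N_{\beta,q,z}(L_N\in\cdot)$ as $N\to\infty$ is $\delta_{(1/q,\dots,1/q)}$ for $\beta<\beta_c(q,z)$ and is the mixture $\frac1q\sum_{i=1}^q\delta_{u e_i+\frac{1-u}{q}(1,\dots,1)}$ with $u=u(\beta,q,z)>0$ for $\beta>\beta_c(q,z)$; equivalently, $\beta_c(q,z)$ is the threshold such that the free energy $\Gamma_{\beta,q,z}(\nu)=-\frac{\beta}{z}\sum_{i=1}^q\nu_i^z+\sum_{i=1}^q\nu_i\log(q\nu_i)$ on probability vectors $\nu$ has the uniform vector as its unique global minimizer for $\beta<\beta_c(q,z)$ and not for $\beta>\beta_c(q,z)$. *)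

theory Defs
  imports Complex_Main
begin

text \<open>Probability vectors on \<open>{1,...,q}\<close>, encoded as functions on \<open>{0..<q}\<close>
  that vanish outside this index set.\<close>
definition prob_vectors :: "nat \<Rightarrow> (nat \<Rightarrow> real) set" where
  "prob_vectors q = {\<nu>. (\<forall>i<q. 0 \<le> \<nu> i) \<and> (\<forall>i\<ge>q. \<nu> i = 0) \<and> (\<Sum>i<q. \<nu> i) = 1}"

definition uniform_vec :: "nat \<Rightarrow> nat \<Rightarrow> real" where
  "uniform_vec q = (\<lambda>i. if i < q then 1 / real q else 0)"

text \<open>Free energy; note \<open>0 * ln 0 = 0\<close> and \<open>0 powr z = 0\<close> in Isabelle, matching the
  convention \<open>0 log 0 = 0\<close>.\<close>
definition Gamma :: "real \<Rightarrow> nat \<Rightarrow> real \<Rightarrow> (nat \<Rightarrow> real) \<Rightarrow> real" where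
  "Gamma \<beta> q z \<nu> = - (\<beta> / z) * (\<Sum>i<q. \<nu> i powr z) + (\<Sum>i<q. \<nu> i * ln (real q * \<nu> i))"

definition uniform_unique_min :: "real \<Rightarrow> nat \<Rightarrow> real \<Rightarrow> bool" where
  "uniform_unique_min \<beta> q z \<longleftrightarrow>
     (\<forall>\<nu>\<in>prob_vectors q. \<nu> \<noteq> uniform_vec q \<longrightarrow> Gamma \<beta> q z (uniform_vec q) < Gamma \<beta> q z \<nu>)"

definition beta_c :: "nat \<Rightarrow> real \<Rightarrow> real" where
  "beta_c q z = (THE b. b > 0 \<and> (\<forall>\<beta>. 0 \<le> \<beta> \<and> \<beta> < b \<longrightarrow> uniform_unique_min \<beta> q z)
                               \<and> (\<forall>\<beta>. \<beta> > b \<longrightarrow> \<not> uniform_unique_min \<beta> q z))"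

end

theory Submission
  imports Defs
begin
lemma taylor2:
  fixes f fd fdd :: "real \<Rightarrow> real"
  assumes d1: "\<And>y. lo \<le> y \<Longrightarrow> y \<le> hi \<Longrightarrow> (f has_real_derivative fd y) (at y)"
    and d2: "\<And>y. lo \<le> y \<Longrightarrow> y \<le> hi \<Longrightarrow> (fd has_real_derivative fdd y) (at y)"
    and "lo \<le> c" "c \<le> hi" "lo \<le> x" "x \<le> hi" "x \<noteq> c"
  shows "\<exists>\<xi>. min x c < \<xi> \<and> \<xi> < max x c \<and> f x = f c + fd c * (x - c) + fdd \<xi> / 2 * (x - c)^2"
proof -
  define diff where "diff = (\<lambda>m::nat. if m = 0 then f else if m = 1 then fd else fdd)"
  have D: "\<forall>m t. m < 2 \<and> lo \<le> t \<and> t \<le> hi \<longrightarrow> DERIV (diff m) t :> diff (Suc m) t"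
  proof (intro allI impI)
    fix m t assume h: "m < (2::nat) \<and> lo \<le> t \<and> t \<le> hi"
    then have "m = 0 \<or> m = 1" by auto
    then show "DERIV (diff m) t :> diff (Suc m) t"
      using d1 d2 h by (auto simp: diff_def)
  qed
  have "diff 0 = f" by (simp add: diff_def)
  from Taylor[of 2 diff f lo hi c x, OF _ this D] assms(3-7)
  obtain t where t: "(if x < c then x < t \<and> t < c else c < t \<and> t < x)"
    "f x = (\<Sum>m<2. (diff m c / fact m) * (x - c)^m) + (diff 2 t / fact 2) * (x - c)^2"
    by auto
  have "(\<Sum>m<2. (diff m c / fact m) * (x - c)^m) = f c + fd c * (x - c)"
    by (simp add: numeral_2_eq_2 diff_def)
  moreover have "diff 2 t / fact 2 = fdd t / 2" by (simp add: diff_def)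
  ultimately show ?thesis using t assms(7)
    by (intro exI[of _ t]) (auto split: if_splits)
qed

lemma powr_taylor:
  fixes z a x :: real
  assumes z: "z \<ge> 2" and a: "a > 0" and x: "x > 0"
  shows "z*(z-1)/2 * (min x a) powr (z-2) * (x-a)^2 \<le> x powr z - a powr z - z * a powr (z-1) * (x-a)"
    and "x powr z - a powr z - z * a powr (z-1) * (x-a) \<le> z*(z-1)/2 * (max x a) powr (z-2) * (x-a)^2"
proof -
  have "z*(z-1)/2 * (min x a) powr (z-2) * (x-a)^2 \<le> x powr z - a powr z - z * a powr (z-1) * (x-a)
    \<and> x powr z - a powr z - z * a powr (z-1) * (x-a) \<le> z*(z-1)/2 * (max x a) powr (z-2) * (x-a)^2"
  proof (cases "x = a")
    case True then show ?thesis by simp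
  next
    case False
    have d1: "((\<lambda>y. y powr z) has_real_derivative z * y powr (z-1)) (at y)"
      if "min x a \<le> y" "y \<le> max x a" for y
      using that a x by (intro has_real_derivative_powr) auto
    have d2: "((\<lambda>y. z * y powr (z-1)) has_real_derivative z*(z-1) * y powr (z-2)) (at y)"
      if "min x a \<le> y" "y \<le> max x a" for y
    proof -
      have "y > 0" using that a x by auto
      from has_real_derivative_powr[OF this, of "z-1"]
      have "((\<lambda>y. y powr (z-1)) has_real_derivative (z-1) * y powr (z-2)) (at y)"
        by (simp add: algebra_simps)
      then have "((\<lambda>y. z * y powr (z-1)) has_real_derivative z * ((z-1) * y powr (z-2))) (at y)"
        by (rule DERIV_cmult)
      then show ?thesis by (simp add: mult.assoc)
    qed
    from taylor2[where f="\<lambda>y. y powr z" and fd="\<lambda>y. z * y powr (z-1)" and fdd="\<lambda>y. z*(z-1) * y powr (z-2)"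
        and lo="min x a" and hi="max x a" and c=a and x=x, OF d1 d2] False
    obtain \<xi> where xi: "min x a < \<xi>" "\<xi> < max x a"
      "x powr z = a powr z + z * a powr (z-1) * (x-a) + z*(z-1) * \<xi> powr (z-2) / 2 * (x-a)^2"
      by auto
    have m1: "(min x a) powr (z-2) \<le> \<xi> powr (z-2)"
      using xi a x z by (intro powr_mono2) auto
    have m2: "\<xi> powr (z-2) \<le> (max x a) powr (z-2)"
      using xi a x z by (intro powr_mono2) auto
    have c: "0 \<le> z*(z-1)/2 * (x-a)^2" using z by auto
    have "z*(z-1)/2 * (x-a)^2 * (min x a) powr (z-2) \<le> z*(z-1)/2 * (x-a)^2 * \<xi> powr (z-2)"
      using mult_left_mono[OF m1 c] .
    moreover have "z*(z-1)/2 * (x-a)^2 * \<xi> powr (z-2) \<le> z*(z-1)/2 * (x-a)^2 * (max x a) powr (z-2)"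
      using mult_left_mono[OF m2 c] .
    ultimately show ?thesis using xi(3) by (simp add: algebra_simps)
  qed
  then show "z*(z-1)/2 * (min x a) powr (z-2) * (x-a)^2 \<le> x powr z - a powr z - z * a powr (z-1) * (x-a)"
    and "x powr z - a powr z - z * a powr (z-1) * (x-a) \<le> z*(z-1)/2 * (max x a) powr (z-2) * (x-a)^2"
    by auto
qed

lemma powr_tangent_nonneg:
  fixes z a x :: real
  assumes z: "z \<ge> 2" and a: "a > 0" and x: "x \<ge> 0"
  shows "0 \<le> x powr z - a powr z - z * a powr (z-1) * (x-a)"
proof (cases "x = 0")
  case True
  have e: "a powr (z-1) * a = a powr z" using a by (simp add: powr_diff)
  have "x powr z - a powr z - z * a powr (z-1) * (x-a) = (z-1) * (a powr z)"
  proof -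
    have "x powr z - a powr z - z * a powr (z-1) * (x-a) = z * (a powr (z-1) * a) - a powr z"
      using True by (simp add: algebra_simps)
    also have "\<dots> = (z-1) * (a powr z)" unfolding e by (simp add: algebra_simps)
    finally show ?thesis .
  qed
  moreover have "0 \<le> (z-1) * (a powr z)" using z by simp
  ultimately show ?thesis by simp
next
  case False
  then have xp: "x > 0" using x by auto
  have "0 \<le> z*(z-1)/2 * (min x a) powr (z-2) * (x-a)^2" using z by simp
  with powr_taylor(1)[OF z a xp] show ?thesis by linarith
qed

lemma powr_tangent_upper:
  fixes z a x :: real
  assumes z: "z \<ge> 2" and a: "a > 0" and x: "x \<ge> 0"
  shows "x powr z - a powr z - z * a powr (z-1) * (x-a) \<le> z*(z-1)/2 * (max x a) powr (z-2) * (x-a)^2"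
proof (cases "x = 0")
  case True
  have e: "a powr (z-1) * a = a powr z" using a by (simp add: powr_diff)
  have e2: "a powr (z-2) * a^2 = a powr z" using a by (simp add: powr_diff power2_eq_square)
  have "x powr z - a powr z - z * a powr (z-1) * (x-a) = z * (a powr (z-1) * a) - a powr z"
    using True by (simp add: algebra_simps)
  also have "\<dots> = (z-1) * (a powr z)" unfolding e by (simp add: algebra_simps)
  also have "\<dots> \<le> z*(z-1)/2 * (a powr z)"
  proof (rule mult_right_mono)
    have "(z-1)*2 \<le> (z-1)*z" using z by (intro mult_left_mono) auto
    then show "z - 1 \<le> z*(z-1)/2" by (simp add: algebra_simps)
  qed simp
  also have "\<dots> = z*(z-1)/2 * (a powr (z-2) * a^2)" unfolding e2 ..
  also have "\<dots> = z*(z-1)/2 * (max x a) powr (z-2) * (x-a)^2" using True a by (simp add: max_def)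
  finally show ?thesis .
next
  case False
  then have "x > 0" using x by auto
  from powr_taylor(2)[OF z a this] show ?thesis .
qed

definition fl :: "real \<Rightarrow> real" where "fl x = x * ln x - x + 1"

lemma fl_taylor:
  assumes x: "x > 0"
  shows "\<exists>\<xi>. min x 1 \<le> \<xi> \<and> \<xi> \<le> max x 1 \<and> fl x = (x-1)^2 / (2*\<xi>)"
proof (cases "x = 1")
  case True then show ?thesis by (intro exI[of _ 1]) (simp add: fl_def)
next
  case False
  have d1: "(fl has_real_derivative ln y) (at y)" if "min x 1 \<le> y" "y \<le> max x 1" for y
  proof -
    have "y > 0" using that x by auto
    then show ?thesis unfolding fl_def
      by (auto intro!: derivative_eq_intros simp: field_simps)
  qed
  have d2: "(ln has_real_derivative 1/y) (at y)" if "min x 1 \<le> y" "y \<le> max x 1" for y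
  proof -
    have "y > 0" using that x by auto
    then show ?thesis by (auto intro!: derivative_eq_intros simp: field_simps)
  qed
  from taylor2[where f=fl and fd=ln and fdd="\<lambda>y. 1/y" and lo="min x 1" and hi="max x 1" and c=1 and x=x, OF d1 d2] False
  obtain \<xi> where xi: "min x 1 < \<xi>" "\<xi> < max x 1" "fl x = fl 1 + ln 1 * (x-1) + 1/\<xi> / 2 * (x-1)^2"
    by auto
  then show ?thesis by (intro exI[of _ \<xi>]) (auto simp: fl_def)
qed

lemma fl_lower:
  assumes "0 \<le> x" "x \<le> X" "1 \<le> X"
  shows "(x-1)^2 / (2*X) \<le> fl x"
proof (cases "x = 0")
  case True then show ?thesis using assms by (simp add: fl_def field_simps)
next
  case False
  then have "x > 0" using assms by auto
  from fl_taylor[OF this] obtain \<xi> where xi: "min x 1 \<le> \<xi>" "\<xi> \<le> max x 1" "fl x = (x-1)^2 / (2*\<xi>)" by auto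
  have "\<xi> > 0" "\<xi> \<le> X" using xi \<open>x>0\<close> assms by auto
  then show ?thesis using xi(3) by (simp add: frac_le)
qed

lemma fl_upper:
  assumes "0 < m" "m \<le> x" "m \<le> 1"
  shows "fl x \<le> (x-1)^2 / (2*m)"
proof -
  have "x > 0" using assms by auto
  from fl_taylor[OF this] obtain \<xi> where xi: "min x 1 \<le> \<xi>" "\<xi> \<le> max x 1" "fl x = (x-1)^2 / (2*\<xi>)" by auto
  have "m \<le> \<xi>" using xi assms by auto
  then show ?thesis using xi(3) assms by (simp add: frac_le)
qed

definition KL :: "nat \<Rightarrow> (nat \<Rightarrow> real) \<Rightarrow> real" where
  "KL q \<nu> = (\<Sum>i<q. \<nu> i * ln (real q * \<nu> i))"
definition Dv :: "nat \<Rightarrow> real \<Rightarrow> (nat \<Rightarrow> real) \<Rightarrow> real" where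
  "Dv q z \<nu> = (\<Sum>i<q. \<nu> i powr z) - real q * (1 / real q) powr z"

lemma Gamma_diff:
  assumes "q > 0"
  shows "Gamma \<beta> q z \<nu> - Gamma \<beta> q z (uniform_vec q) = KL q \<nu> - \<beta>/z * Dv q z \<nu>"
proof -
  have "(\<Sum>i<q. uniform_vec q i powr z) = real q * (1 / real q) powr z"
    by (simp add: uniform_vec_def)
  moreover have "(\<Sum>i<q. uniform_vec q i * ln (real q * uniform_vec q i)) = 0"
    using assms by (simp add: uniform_vec_def)
  ultimately show ?thesis unfolding Gamma_def KL_def Dv_def by (simp add: algebra_simps)
qed

lemma pv_le1:
  assumes "\<nu> \<in> prob_vectors q" "i < q"
  shows "0 \<le> \<nu> i" "\<nu> i \<le> 1"
proof -
  show "0 \<le> \<nu> i" using assms by (simp add: prob_vectors_def)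
  have "\<nu> i \<le> (\<Sum>j<q. \<nu> j)"
    using assms by (intro member_le_sum) (auto simp: prob_vectors_def)
  then show "\<nu> i \<le> 1" using assms by (simp add: prob_vectors_def)
qed

lemma KL_fl:
  assumes "\<nu> \<in> prob_vectors q" "q > 0"
  shows "KL q \<nu> = (1 / real q) * (\<Sum>i<q. fl (real q * \<nu> i))"
proof -
  have s: "(\<Sum>i<q. \<nu> i) = 1" using assms by (simp add: prob_vectors_def)
  have "(\<Sum>i<q. fl (real q * \<nu> i)) = (\<Sum>i<q. real q * (\<nu> i * ln (real q * \<nu> i))) - (\<Sum>i<q. real q * \<nu> i) + (\<Sum>i<q. 1)"
    unfolding fl_def by (simp add: sum.distrib sum_subtractf algebra_simps)
  also have "\<dots> = real q * KL q \<nu>"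
    unfolding KL_def by (simp add: sum_distrib_left[symmetric] s)
  finally show ?thesis using assms by simp
qed

lemma Dv_phi:
  assumes "\<nu> \<in> prob_vectors q" "q > 0"
  shows "Dv q z \<nu> = (\<Sum>i<q. \<nu> i powr z - (1/real q) powr z - z * (1/real q) powr (z-1) * (\<nu> i - 1/real q))"
proof -
  have s: "(\<Sum>i<q. \<nu> i) = 1" using assms by (simp add: prob_vectors_def)
  have "(\<Sum>i<q. \<nu> i - 1/real q) = 0" using s assms by (simp add: sum_subtractf)
  then have "(\<Sum>i<q. z * (1/real q) powr (z-1) * (\<nu> i - 1/real q)) = 0"
    by (simp add: sum_distrib_left[symmetric])
  then show ?thesis unfolding Dv_def by (simp add: sum_subtractf)
qed

lemma KL_lower:
  assumes "\<nu> \<in> prob_vectors q" "q > 0"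
  shows "(1/2) * (\<Sum>i<q. (\<nu> i - 1/real q)^2) \<le> KL q \<nu>"
proof -
  have "(\<Sum>i<q. (real q)/2 * (\<nu> i - 1/real q)^2) \<le> (\<Sum>i<q. fl (real q * \<nu> i))"
  proof (rule sum_mono)
    fix i assume i: "i \<in> {..<q}"
    have "(real q * \<nu> i - 1)^2 / (2 * real q) \<le> fl (real q * \<nu> i)"
      using pv_le1[OF assms(1)] i assms(2) by (intro fl_lower) auto
    moreover have "(real q * \<nu> i - 1)^2 / (2 * real q) = (real q)/2 * (\<nu> i - 1/real q)^2"
      using assms(2) by (simp add: field_simps power2_eq_square)
    ultimately show "(real q)/2 * (\<nu> i - 1/real q)^2 \<le> fl (real q * \<nu> i)" by simp
  qed
  then have "(1/real q) * (\<Sum>i<q. (real q)/2 * (\<nu> i - 1/real q)^2) \<le> KL q \<nu>"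
    unfolding KL_fl[OF assms] using assms(2) by (intro mult_left_mono) auto
  moreover have "(1/real q) * (\<Sum>i<q. (real q)/2 * (\<nu> i - 1/real q)^2) = (1/2) * (\<Sum>i<q. (\<nu> i - 1/real q)^2)"
    unfolding sum_distrib_left using assms(2) by (intro sum.cong) auto
  ultimately show ?thesis by linarith
qed

lemma Dv_upper:
  assumes "\<nu> \<in> prob_vectors q" "q > 0" "z \<ge> 2"
  shows "Dv q z \<nu> \<le> z*(z-1)/2 * (\<Sum>i<q. (\<nu> i - 1/real q)^2)"
proof -
  have "Dv q z \<nu> \<le> (\<Sum>i<q. z*(z-1)/2 * (\<nu> i - 1/real q)^2)"
    unfolding Dv_phi[OF assms(1,2)]
  proof (rule sum_mono)
    fix i assume i: "i \<in> {..<q}"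
    have a: "1/real q > 0" using assms by simp
    have "(max (\<nu> i) (1/real q)) powr (z-2) \<le> 1 powr (z-2)"
      using pv_le1[OF assms(1)] i assms by (intro powr_mono2) (auto simp: le_max_iff_disj)
    then have le: "(max (\<nu> i) (1/real q)) powr (z-2) \<le> 1" by simp
    have "\<nu> i powr z - (1/real q) powr z - z * (1/real q) powr (z-1) * (\<nu> i - 1/real q)
        \<le> z*(z-1)/2 * (max (\<nu> i) (1/real q)) powr (z-2) * (\<nu> i - 1/real q)^2"
      using pv_le1[OF assms(1)] i by (intro powr_tangent_upper assms(3) a) auto
    also have "\<dots> \<le> z*(z-1)/2 * 1 * (\<nu> i - 1/real q)^2"
      using le assms(3) by (intro mult_right_mono mult_left_mono) auto
    finally show "\<nu> i powr z - (1/real q) powr z - z * (1/real q) powr (z-1) * (\<nu> i - 1/real q)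
        \<le> z*(z-1)/2 * (\<nu> i - 1/real q)^2" by simp
  qed
  then show ?thesis by (simp add: sum_distrib_left)
qed

lemma Dv_nonneg:
  assumes "\<nu> \<in> prob_vectors q" "q > 0" "z \<ge> 2"
  shows "0 \<le> Dv q z \<nu>"
  unfolding Dv_phi[OF assms(1,2)]
  using pv_le1[OF assms(1)] assms by (intro sum_nonneg powr_tangent_nonneg) auto

lemma KL_ratio_lower:
  assumes "\<nu> \<in> prob_vectors q" "q > 0" "z \<ge> 2"
  shows "Dv q z \<nu> / (z-1) \<le> z * KL q \<nu>"
proof -
  let ?S = "\<Sum>i<q. (\<nu> i - 1/real q)^2"
  have "Dv q z \<nu> / (z-1) \<le> z/2 * ?S"
    using Dv_upper[OF assms] assms(3) by (simp add: field_simps)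
  also have "\<dots> \<le> z * KL q \<nu>" using KL_lower[OF assms(1,2)] assms(3) by simp
  finally show ?thesis .
qed

lemma KL_pos:
  assumes "\<nu> \<in> prob_vectors q" "q > 0" "\<nu> \<noteq> uniform_vec q"
  shows "KL q \<nu> > 0"
proof -
  obtain i where i: "i < q" "\<nu> i \<noteq> 1/real q"
  proof (rule ccontr)
    assume "\<not> thesis"
    then have "\<forall>i<q. \<nu> i = 1/real q" using that by blast
    then have "\<nu> = uniform_vec q" using assms(1)
      by (auto simp: uniform_vec_def prob_vectors_def fun_eq_iff)
    then show False using assms(3) by simp
  qed
  have "0 < (\<nu> i - 1/real q)^2" using i by simp
  also have "\<dots> \<le> (\<Sum>i<q. (\<nu> i - 1/real q)^2)" using i by (intro member_le_sum) auto
  finally show ?thesis using KL_lower[OF assms(1,2)] by simp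
qed

lemma KL_upper:
  assumes "\<nu> \<in> prob_vectors q" "q > 0" "0 < m" "m \<le> 1" "\<And>i. i < q \<Longrightarrow> m \<le> real q * \<nu> i"
  shows "KL q \<nu> \<le> real q / (2*m) * (\<Sum>i<q. (\<nu> i - 1/real q)^2)"
proof -
  have "(\<Sum>i<q. fl (real q * \<nu> i)) \<le> (\<Sum>i<q. real q ^ 2 / (2*m) * (\<nu> i - 1/real q)^2)"
  proof (rule sum_mono)
    fix i assume i: "i \<in> {..<q}"
    have "fl (real q * \<nu> i) \<le> (real q * \<nu> i - 1)^2 / (2*m)"
      using assms i by (intro fl_upper) auto
    also have "(real q * \<nu> i - 1)^2 = real q ^ 2 * (\<nu> i - 1/real q)^2"
      using assms(2) by (simp add: field_simps power2_eq_square)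
    finally show "fl (real q * \<nu> i) \<le> real q ^ 2 / (2*m) * (\<nu> i - 1/real q)^2" by simp
  qed
  then have "KL q \<nu> \<le> (1/real q) * (\<Sum>i<q. real q ^ 2 / (2*m) * (\<nu> i - 1/real q)^2)"
    unfolding KL_fl[OF assms(1,2)] using assms(2) by (intro mult_left_mono) auto
  also have "\<dots> = real q / (2*m) * (\<Sum>i<q. (\<nu> i - 1/real q)^2)"
    unfolding sum_distrib_left using assms(2) by (intro sum.cong) (auto simp: power2_eq_square)
  finally show ?thesis .
qed

lemma Dv_lower:
  assumes "\<nu> \<in> prob_vectors q" "q > 0" "z \<ge> 2" "0 < m" "m \<le> 1/real q" "\<And>i. i < q \<Longrightarrow> m \<le> \<nu> i"
  shows "z*(z-1)/2 * m powr (z-2) * (\<Sum>i<q. (\<nu> i - 1/real q)^2) \<le> Dv q z \<nu>"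
proof -
  have "(\<Sum>i<q. z*(z-1)/2 * m powr (z-2) * (\<nu> i - 1/real q)^2) \<le> Dv q z \<nu>"
    unfolding Dv_phi[OF assms(1,2)]
  proof (rule sum_mono)
    fix i assume i: "i \<in> {..<q}"
    have a: "1/real q > 0" using assms by simp
    have vi: "\<nu> i > 0" using assms(4,6) i by force
    have "m powr (z-2) \<le> (min (\<nu> i) (1/real q)) powr (z-2)"
      using assms i by (intro powr_mono2) auto
    then have "z*(z-1)/2 * m powr (z-2) * (\<nu> i - 1/real q)^2 \<le> z*(z-1)/2 * (min (\<nu> i) (1/real q)) powr (z-2) * (\<nu> i - 1/real q)^2"
      using assms(3) by (intro mult_right_mono mult_left_mono) auto
    also have "\<dots> \<le> \<nu> i powr z - (1/real q) powr z - z * (1/real q) powr (z-1) * (\<nu> i - 1/real q)"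
      by (rule powr_taylor(1)[OF assms(3) a vi])
    finally show "z*(z-1)/2 * m powr (z-2) * (\<nu> i - 1/real q)^2 \<le> \<nu> i powr z - (1/real q) powr z - z * (1/real q) powr (z-1) * (\<nu> i - 1/real q)" .
  qed
  then show ?thesis by (simp add: sum_distrib_left)
qed

lemma near_uniform:
  assumes q: "q \<ge> 2" and z: "z \<ge> 2"
  shows "\<exists>\<mu>\<in>prob_vectors q. Dv q z \<mu> > 0 \<and>
    z * KL q \<mu> < (real q powr (z-1) * (real q + 2) / ((z-1)*(real q+1))) * Dv q z \<mu>"
proof -
  define Q where "Q = real q"
  have Q: "Q \<ge> 2" using q by (simp add: Q_def)
  define c where "c = (2*Q+3)/(2*Q+4)"
  have c0: "0 < c" "c < 1" using Q by (auto simp: c_def)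
  define r where "r = c powr (1/(z-1))"
  have r0: "0 < r" using c0 by (simp add: r_def)
  have "c powr (1/(z-1)) < 1 powr (1/(z-1))" using c0 z by (intro powr_less_mono2) auto
  then have r1: "r < 1" unfolding r_def by simp
  have rc: "r powr (z-1) = c" unfolding r_def using c0 z by (simp add: powr_powr)
  define \<epsilon> where "\<epsilon> = (1-r)/Q"
  have e0: "0 < \<epsilon>" using r1 Q by (simp add: \<epsilon>_def)
  have eQ: "1/Q - \<epsilon> = r/Q" using Q by (simp add: \<epsilon>_def field_simps)
  define \<mu> where "\<mu> = (\<lambda>i. if i < q then 1/Q + (if i = 0 then \<epsilon> else 0) - (if i = 1 then \<epsilon> else 0) else 0)"
  have lowb: "r/Q \<le> \<mu> i" if "i < q" for i
    using that e0 eQ by (auto simp: \<mu>_def)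
  have mu_pv: "\<mu> \<in> prob_vectors q"
  proof -
    have "(\<Sum>i<q. \<mu> i) = (\<Sum>i<q. 1/Q + (if i = 0 then \<epsilon> else 0) - (if i = 1 then \<epsilon> else 0))"
      by (simp add: \<mu>_def)
    also have "\<dots> = (\<Sum>i<q. 1/Q) + (\<Sum>i<q. (if i = 0 then \<epsilon> else 0)) - (\<Sum>i<q. (if i = 1 then \<epsilon> else 0))"
      by (simp add: sum.distrib sum_subtractf)
    also have "\<dots> = 1" using q by (simp add: Q_def)
    finally have s: "(\<Sum>i<q. \<mu> i) = 1" .
    have "0 \<le> \<mu> i" if "i < q" for i
      using lowb[OF that] r0 Q by (smt (verit) divide_pos_pos)
    then show ?thesis using s by (auto simp: prob_vectors_def \<mu>_def)
  qed
  define S where "S = (\<Sum>i<q. (\<mu> i - 1/real q)^2)"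
  have S0: "S > 0"
  proof -
    have "0 < (\<mu> 0 - 1/real q)^2" using e0 q by (simp add: \<mu>_def Q_def)
    also have "\<dots> \<le> S" unfolding S_def using q by (intro member_le_sum) auto
    finally show ?thesis .
  qed
  have qpos: "q > 0" using q by simp
  have KLb: "KL q \<mu> \<le> Q / (2*r) * S"
    unfolding S_def Q_def
  proof (rule KL_upper[OF mu_pv qpos r0])
    show "r \<le> 1" using r1 by simp
    fix i assume "i < q"
    from lowb[OF this] have "Q * (r/Q) \<le> Q * \<mu> i" using Q by (intro mult_left_mono) auto
    then show "r \<le> real q * \<mu> i" using Q by (simp add: Q_def)
  qed
  have Dvb: "z*(z-1)/2 * (r/Q) powr (z-2) * S \<le> Dv q z \<mu>"
    unfolding S_def
  proof (rule Dv_lower[OF mu_pv qpos z])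
    show "0 < r/Q" using r0 Q by simp
    show "r/Q \<le> 1/real q" using r1 Q by (simp add: Q_def divide_right_mono)
    show "\<And>i. i < q \<Longrightarrow> r / Q \<le> \<mu> i" by (rule lowb)
  qed
  define L where "L = (real q powr (z-1) * (real q + 2) / ((z-1)*(real q+1)))"
  have L0: "L > 0" using z q unfolding L_def by (intro divide_pos_pos mult_pos_pos) auto
  have key: "Q/r < L * ((z-1) * (r/Q) powr (z-2))"
  proof -
    have e1: "Q powr (z-1) / Q powr (z-2) = Q" using Q by (simp add: powr_diff[symmetric])
    have e2: "r powr (z-2) = c / r" using r0 rc by (simp add: powr_diff field_simps power2_eq_square)
    have "L * ((z-1) * (r/Q) powr (z-2)) = (Q powr (z-1) / Q powr (z-2)) * (Q+2)/(Q+1) * r powr (z-2)"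
    proof -
      have L': "L = Q powr (z-1) * (Q+2) / ((z-1)*(Q+1))" by (simp add: L_def Q_def)
      have pd: "(r/Q) powr (z-2) = r powr (z-2) / Q powr (z-2)" using r0 Q by (simp add: powr_divide)
      have nz: "z - 1 \<noteq> 0" "Q + 1 \<noteq> 0" "Q powr (z-2) \<noteq> 0" using z Q by auto
      have gen: "\<And>A B C w P::real. w \<noteq> 0 \<Longrightarrow> P \<noteq> 0 \<Longrightarrow> C \<noteq> 0 \<Longrightarrow>
         A * (Q+2) / (w * P) * (w * (B / C)) = (A / C) * (Q+2) / P * B"
        by (simp add: field_simps)
      show ?thesis unfolding L' pd using gen[OF nz] by simp

    qed
    also have "\<dots> = Q * (Q+2) * c / ((Q+1) * r)" unfolding e1 e2 by (simp add: field_simps)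
    finally have eq: "L * ((z-1) * (r/Q) powr (z-2)) = Q * (Q+2) * c / ((Q+1) * r)" .
    have "(Q+1) < (Q+2) * c" using Q by (simp add: c_def field_simps)
    then have "Q * (Q+1) < Q * ((Q+2) * c)" using Q by (intro mult_strict_left_mono) auto
    then have "Q * (Q+1) / ((Q+1) * r) < Q * ((Q+2) * c) / ((Q+1) * r)"
      using r0 Q by (intro divide_strict_right_mono) auto
    moreover have "Q * (Q+1) / ((Q+1) * r) = Q / r" using Q by simp
    ultimately have "Q / r < Q * (Q+2) * c / ((Q+1) * r)" by (simp add: mult.assoc)
    then show ?thesis using eq by simp
  qed
  have "z * KL q \<mu> \<le> z * (Q/(2*r) * S)" using KLb z by (intro mult_left_mono) auto
  also have "\<dots> = (z * S / 2) * (Q/r)" by (simp add: field_simps)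
  also have "\<dots> < (z * S / 2) * (L * ((z-1) * (r/Q) powr (z-2)))"
    using key S0 z by (intro mult_strict_left_mono) auto
  also have "\<dots> = L * (z*(z-1)/2 * (r/Q) powr (z-2) * S)" by (simp add: field_simps)
  also have "\<dots> \<le> L * Dv q z \<mu>" using Dvb L0 by (intro mult_left_mono) auto
  finally have fin: "z * KL q \<mu> < L * Dv q z \<mu>" .
  have "0 < z*(z-1)/2 * (r/Q) powr (z-2) * S" using z S0 r0 Q by (intro mult_pos_pos) auto
  then have "Dv q z \<mu> > 0" using Dvb by linarith
  then show ?thesis using fin mu_pv unfolding L_def by blast
qed

definition Rset :: "nat \<Rightarrow> real \<Rightarrow> real set" where
  "Rset q z = {z * KL q \<nu> / Dv q z \<nu> | \<nu>. \<nu> \<in> prob_vectors q \<and> Dv q z \<nu> > 0}"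
definition Bq :: "nat \<Rightarrow> real \<Rightarrow> real" where
  "Bq q z = Inf (Rset q z)"
definition Lq :: "nat \<Rightarrow> real \<Rightarrow> real" where
  "Lq q z = real q powr (z-1) * (real q + 2) / ((z-1)*(real q+1))"

lemma Rset_ne: "q \<ge> 2 \<Longrightarrow> z \<ge> 2 \<Longrightarrow> Rset q z \<noteq> {}"
  using near_uniform[of q z] unfolding Rset_def by blast

lemma Rset_lower: assumes "q \<ge> 2" "z \<ge> 2" "x \<in> Rset q z" shows "1/(z-1) \<le> x"
proof -
  from assms(3) obtain \<nu> where \<nu>: "\<nu> \<in> prob_vectors q" "Dv q z \<nu> > 0" "x = z * KL q \<nu> / Dv q z \<nu>"
    unfolding Rset_def by blast
  have "Dv q z \<nu> / (z-1) \<le> z * KL q \<nu>" using KL_ratio_lower[OF \<nu>(1)] assms by simp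
  then have "Dv q z \<nu> / (z-1) / Dv q z \<nu> \<le> z * KL q \<nu> / Dv q z \<nu>"
    using \<nu>(2) by (intro divide_right_mono) auto
  then show ?thesis using \<nu> by simp
qed

lemma Rset_bdd: "q \<ge> 2 \<Longrightarrow> z \<ge> 2 \<Longrightarrow> bdd_below (Rset q z)"
  using Rset_lower by (meson bdd_below.I)

lemma Bq_pos: assumes "q \<ge> 2" "z \<ge> 2" shows "1/(z-1) \<le> Bq q z" "Bq q z > 0"
proof -
  show "1/(z-1) \<le> Bq q z" unfolding Bq_def
    using Rset_ne[OF assms] Rset_lower[OF assms] by (intro cInf_greatest) auto
  moreover have "1/(z-1) > 0" using assms by simp
  ultimately show "Bq q z > 0" by linarith
qed

lemma Bq_mult:
  assumes "q \<ge> 2" "z \<ge> 2" "\<nu> \<in> prob_vectors q"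
  shows "Bq q z * Dv q z \<nu> \<le> z * KL q \<nu>"
proof (cases "Dv q z \<nu> > 0")
  case True
  then have "z * KL q \<nu> / Dv q z \<nu> \<in> Rset q z" using assms unfolding Rset_def by blast
  then have "Bq q z \<le> z * KL q \<nu> / Dv q z \<nu>" unfolding Bq_def
    using Rset_bdd[OF assms(1,2)] by (intro cInf_lower) auto
  then show ?thesis using True by (simp add: field_simps)
next
  case False
  then have "Dv q z \<nu> = 0" using Dv_nonneg[OF assms(3)] assms by force
  moreover have "0 \<le> KL q \<nu>"
  proof -
    have "0 \<le> (1/2) * (\<Sum>i<q. (\<nu> i - 1/real q)^2)" by (intro mult_nonneg_nonneg sum_nonneg) auto
    then show ?thesis using KL_lower[OF assms(3)] assms by linarith
  qed
  ultimately show ?thesis using assms by simp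
qed

lemma Bq_lt_L: assumes "q \<ge> 2" "z \<ge> 2" shows "Bq q z < Lq q z"
proof -
  obtain \<mu> where \<mu>: "\<mu> \<in> prob_vectors q" "Dv q z \<mu> > 0" "z * KL q \<mu> < Lq q z * Dv q z \<mu>"
    using near_uniform[OF assms] unfolding Lq_def by blast
  then have "z * KL q \<mu> / Dv q z \<mu> \<in> Rset q z" unfolding Rset_def by blast
  then have "Bq q z \<le> z * KL q \<mu> / Dv q z \<mu>" unfolding Bq_def
    using Rset_bdd[OF assms] by (intro cInf_lower) auto
  also have "\<dots> < Lq q z" using \<mu> by (simp add: divide_less_eq)
  finally show ?thesis .
qed

lemma uum_below:
  assumes "q \<ge> 2" "z \<ge> 2" "0 \<le> \<beta>" "\<beta> < Bq q z"
  shows "uniform_unique_min \<beta> q z"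
  unfolding uniform_unique_min_def
proof (intro ballI impI)
  fix \<nu> assume \<nu>: "\<nu> \<in> prob_vectors q" "\<nu> \<noteq> uniform_vec q"
  have q0: "q > 0" using assms by simp
  have "\<beta>/z * Dv q z \<nu> < KL q \<nu>"
  proof (cases "Dv q z \<nu> > 0")
    case True
    have "\<beta> * Dv q z \<nu> < Bq q z * Dv q z \<nu>" using True assms by simp
    also have "\<dots> \<le> z * KL q \<nu>" by (rule Bq_mult[OF assms(1,2) \<nu>(1)])
    finally show ?thesis using assms by (simp add: field_simps)
  next
    case False
    then have "Dv q z \<nu> = 0" using Dv_nonneg[OF \<nu>(1) q0 assms(2)] by force
    then show ?thesis using KL_pos[OF \<nu>(1) q0 \<nu>(2)] by simp
  qed
  then show "Gamma \<beta> q z (uniform_vec q) < Gamma \<beta> q z \<nu>"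
    using Gamma_diff[OF q0, of \<beta> z \<nu>] by linarith
qed

lemma not_uum_above:
  assumes "q \<ge> 2" "z \<ge> 2" "\<beta> > Bq q z"
  shows "\<not> uniform_unique_min \<beta> q z"
proof -
  have "\<exists>x\<in>Rset q z. x < \<beta>" using assms unfolding Bq_def
    using cInf_less_iff[OF Rset_ne[OF assms(1,2)] Rset_bdd[OF assms(1,2)]] by blast
  then obtain \<nu> where \<nu>: "\<nu> \<in> prob_vectors q" "Dv q z \<nu> > 0" "z * KL q \<nu> / Dv q z \<nu> < \<beta>"
    unfolding Rset_def by blast
  have q0: "q > 0" using assms by simp
  have "z * KL q \<nu> < \<beta> * Dv q z \<nu>" using \<nu> by (simp add: divide_less_eq)
  then have "KL q \<nu> - \<beta>/z * Dv q z \<nu> < 0" using assms by (simp add: field_simps)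
  then have lt: "Gamma \<beta> q z \<nu> < Gamma \<beta> q z (uniform_vec q)"
    using Gamma_diff[OF q0, of \<beta> z \<nu>] by linarith
  then have "\<nu> \<noteq> uniform_vec q" by auto
  then show ?thesis using lt \<nu>(1) unfolding uniform_unique_min_def by force
qed

lemma beta_c_eq: assumes "q \<ge> 2" "z \<ge> 2" shows "beta_c q z = Bq q z"
  unfolding beta_c_def
proof (rule the_equality)
  show "Bq q z > 0 \<and> (\<forall>\<beta>. 0 \<le> \<beta> \<and> \<beta> < Bq q z \<longrightarrow> uniform_unique_min \<beta> q z)
        \<and> (\<forall>\<beta>. \<beta> > Bq q z \<longrightarrow> \<not> uniform_unique_min \<beta> q z)"
    using Bq_pos[OF assms] uum_below[OF assms] not_uum_above[OF assms] by blast
next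
  fix b assume b: "b > 0 \<and> (\<forall>\<beta>. 0 \<le> \<beta> \<and> \<beta> < b \<longrightarrow> uniform_unique_min \<beta> q z)
        \<and> (\<forall>\<beta>. \<beta> > b \<longrightarrow> \<not> uniform_unique_min \<beta> q z)"
  define \<beta> where "\<beta> = (b + Bq q z)/2"
  have B0: "Bq q z > 0" using Bq_pos[OF assms] by simp
  show "b = Bq q z"
  proof (rule ccontr)
    assume ne: "b \<noteq> Bq q z"
    show False
    proof (cases "b < Bq q z")
      case True
      then have "uniform_unique_min \<beta> q z" using uum_below[OF assms, of \<beta>] b by (simp add: \<beta>_def)
      moreover have "\<not> uniform_unique_min \<beta> q z" using b True by (simp add: \<beta>_def)
      ultimately show False by simp
    next
      case False
      then have gt: "b > Bq q z" using ne by simp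
      then have "uniform_unique_min \<beta> q z" using b B0 by (simp add: \<beta>_def)
      moreover have "\<not> uniform_unique_min \<beta> q z" using not_uum_above[OF assms, of \<beta>] gt by (simp add: \<beta>_def)
      ultimately show False by simp
    qed
  qed
qed

lemma h_bound:
  fixes Q t :: real
  assumes Q: "Q \<ge> 1" and t: "0 \<le> t" "t \<le> 1/(Q+1)"
  shows "(Q+2)/2 * (1/(Q+1) - t)^2 \<le> (1-t) * ln ((Q+1)*((1-t)/Q)) + t * ln ((Q+1)*t)"
proof -
  have Qn: "Q \<noteq> 0" "Q + 1 \<noteq> 0" "Q > 0" using Q by auto
  define x0 where "x0 = (Q+1)*t"
  define x1 where "x1 = (Q+1)*((1-t)/Q)"
  define d where "d = 1/(Q+1) - t"
  have x0r: "0 \<le> x0" "x0 \<le> 1" using Q t by (auto simp: x0_def field_simps)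
  have x1r: "0 \<le> x1" "x1 \<le> (Q+1)/Q" using Q t by (auto simp: x1_def field_simps)
  have Qd: "(Q+1)*d = 1 - (Q+1)*t" using Q by (simp add: d_def algebra_simps)
  have x0d: "x0 - 1 = -(Q+1)*d" using Qd by (simp add: x0_def algebra_simps)
  have x1d: "x1 - 1 = (Q+1)*d/Q"
  proof -
    have "x1 - 1 = ((Q+1)*(1-t) - Q)/Q" using Q by (simp add: x1_def field_simps)
    also have "(Q+1)*(1-t) - Q = (Q+1)*d" unfolding Qd by (simp add: algebra_simps)
    finally show ?thesis .
  qed
  have f0: "(x0-1)^2/(2*1) \<le> fl x0" using x0r by (intro fl_lower) auto
  have f1: "(x1-1)^2/(2*((Q+1)/Q)) \<le> fl x1" using x1r Q by (intro fl_lower) (auto simp: field_simps)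
  have e: "Q * fl x1 + fl x0 = (Q+1) * ((1-t) * ln ((Q+1)*((1-t)/Q)) + t * ln ((Q+1)*t))"
    unfolding fl_def x0_def x1_def using Qn by (simp add: field_simps)
  have gen: "\<And>P R e::real. P \<noteq> 0 \<Longrightarrow> R \<noteq> 0 \<Longrightarrow> (P*e/R)^2/(2*(P/R)) = P*e^2/(2*R)"
    by (simp add: field_simps power2_eq_square)
  have l1: "(x1-1)^2/(2*((Q+1)/Q)) = (Q+1)*d^2/(2*Q)" unfolding x1d using gen[OF Qn(2) Qn(1)] .
  have l0: "(x0-1)^2/(2*1) = (Q+1)^2*d^2/2" unfolding x0d by (simp add: power2_eq_square algebra_simps)
  have "Q * ((Q+1)*d^2/(2*Q)) + (Q+1)^2*d^2/2 \<le> Q * fl x1 + fl x0"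
  proof -
    have "Q * ((Q+1)*d^2/(2*Q)) \<le> Q * fl x1" using f1 l1 Qn by (intro mult_left_mono) auto
    then show ?thesis using f0 l0 by linarith
  qed
  moreover have "Q * ((Q+1)*d^2/(2*Q)) + (Q+1)^2*d^2/2 = (Q+1) * ((Q+2)/2 * d^2)"
    using Qn by (simp add: field_simps power2_eq_square)
  ultimately have "(Q+1) * ((Q+2)/2 * d^2) \<le> (Q+1) * ((1-t) * ln ((Q+1)*((1-t)/Q)) + t * ln ((Q+1)*t))"
    using e by simp
  then show ?thesis using Q by (simp add: d_def)
qed

lemma g_bounds:
  fixes Q t z :: real
  assumes Q: "Q \<ge> 1" and z: "z \<ge> 2" and t: "0 \<le> t" "t \<le> 1/(Q+1)"
  defines "g \<equiv> Q * ((1-t)/Q) powr z + t powr z - (Q+1) * (1/(Q+1)) powr z"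
  shows "g \<le> z*(z-1)/2 * (1/Q) powr (z-2) * ((Q+1)/Q) * (1/(Q+1) - t)^2"
    and "z*(z-1)/(2*Q) * (1/(Q+1)) powr (z-2) * (1/(Q+1) - t)^2 \<le> g"
proof -
  define a where "a = 1/(Q+1)"
  define s where "s = (1-t)/Q"
  define \<phi> where "\<phi> = (\<lambda>x. x powr z - a powr z - z * a powr (z-1) * (x - a))"
  have a0: "a > 0" using Q by (simp add: a_def)
  have sa: "a \<le> s" "s \<le> 1/Q" using Q t by (auto simp: a_def s_def field_simps)
  have ta: "t \<le> a" using t by (simp add: a_def)
  have sd: "s - a = (a - t)/Q" using Q by (simp add: a_def s_def field_simps)
  have g_eq: "g = \<phi> t + Q * \<phi> s"
  proof -
    have "t + Q*s = (Q+1)*a" using Q by (simp add: a_def s_def)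
    then have "(t - a) + Q * (s - a) = 0" by (simp add: algebra_simps)
    then have "z * a powr (z-1) * ((t - a) + Q * (s - a)) = 0" by simp
    then have "z * a powr (z-1) * (t - a) + Q * (z * a powr (z-1) * (s - a)) = 0"
      by (simp only: distrib_left mult.left_commute)
    then show ?thesis unfolding g_def \<phi>_def s_def[symmetric] a_def[symmetric]
      by (simp add: algebra_simps)
  qed
  have M: "(1/(Q+1)) powr (z-2) \<le> (1/Q) powr (z-2)" using Q z by (intro powr_mono2) (auto simp: field_simps)
  have pt: "\<phi> t \<le> z*(z-1)/2 * (1/Q) powr (z-2) * (a - t)^2"
  proof -
    have "\<phi> t \<le> z*(z-1)/2 * (max t a) powr (z-2) * (t-a)^2"
      unfolding \<phi>_def by (rule powr_tangent_upper[OF z a0 t(1)])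
    also have "\<dots> = z*(z-1)/2 * a powr (z-2) * (a-t)^2" using ta by (simp add: max_def power2_commute)
    also have "\<dots> \<le> z*(z-1)/2 * (1/Q) powr (z-2) * (a - t)^2"
      using M z by (intro mult_right_mono mult_left_mono) (auto simp: a_def)
    finally show ?thesis .
  qed
  have s0: "s > 0" using sa a0 by linarith
  have ps: "\<phi> s \<le> z*(z-1)/2 * (1/Q) powr (z-2) * (s - a)^2"
  proof -
    have "\<phi> s \<le> z*(z-1)/2 * (max s a) powr (z-2) * (s-a)^2"
      unfolding \<phi>_def using s0 by (intro powr_tangent_upper[OF z a0]) auto
    also have "\<dots> = z*(z-1)/2 * s powr (z-2) * (s-a)^2" using sa by (simp add: max_def)
    also have "\<dots> \<le> z*(z-1)/2 * (1/Q) powr (z-2) * (s - a)^2"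
      using sa z s0 by (intro mult_right_mono mult_left_mono powr_mono2) auto
    finally show ?thesis .
  qed
  have ps2: "z*(z-1)/2 * a powr (z-2) * (s - a)^2 \<le> \<phi> s"
  proof -
    have "z*(z-1)/2 * (min s a) powr (z-2) * (s-a)^2 \<le> \<phi> s"
      unfolding \<phi>_def by (rule powr_taylor(1)[OF z a0 s0])
    moreover have "min s a = a" using sa by simp
    ultimately show ?thesis by simp
  qed
  have pt0: "0 \<le> \<phi> t" unfolding \<phi>_def by (rule powr_tangent_nonneg[OF z a0 t(1)])
  have "g \<le> z*(z-1)/2 * (1/Q) powr (z-2) * (a - t)^2 + Q * (z*(z-1)/2 * (1/Q) powr (z-2) * (s - a)^2)"
  proof -
    have "Q * \<phi> s \<le> Q * (z*(z-1)/2 * (1/Q) powr (z-2) * (s - a)^2)" using ps Q by (intro mult_left_mono) auto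
    then show ?thesis unfolding g_eq using pt by linarith
  qed
  also have "\<dots> = z*(z-1)/2 * (1/Q) powr (z-2) * ((Q+1)/Q) * (a - t)^2"
  proof -
    have gen: "\<And>K x. K * x^2 + Q * (K * (x/Q)^2) = K * ((Q+1)/Q) * x^2"
      using Q by (simp add: field_simps power2_eq_square)
    show ?thesis unfolding sd using gen[of "z*(z-1)/2 * (1/Q) powr (z-2)" "a-t"] by (simp only: mult.assoc)
  qed
  finally show "g \<le> z*(z-1)/2 * (1/Q) powr (z-2) * ((Q+1)/Q) * (1/(Q+1) - t)^2" by (simp add: a_def)
  have "Q * (z*(z-1)/2 * a powr (z-2) * (s - a)^2) \<le> g"
  proof -
    have "Q * (z*(z-1)/2 * a powr (z-2) * (s - a)^2) \<le> Q * \<phi> s" using ps2 Q by (intro mult_left_mono) auto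
    then show ?thesis unfolding g_eq using pt0 by linarith
  qed
  moreover have "Q * (z*(z-1)/2 * a powr (z-2) * (s - a)^2) = z*(z-1)/(2*Q) * a powr (z-2) * (a - t)^2"
  proof -
    have gen: "\<And>K x. Q * (K/2 * (x/Q)^2) = K/(2*Q) * x^2"
      using Q by (simp add: field_simps power2_eq_square)
    show ?thesis unfolding sd using gen[of "z*(z-1)*a powr (z-2)"] by (simp add: mult.assoc)
  qed
  ultimately have "z*(z-1)/(2*Q) * a powr (z-2) * (a - t)^2 \<le> g" by linarith
  then show "z*(z-1)/(2*Q) * (1/(Q+1)) powr (z-2) * (1/(Q+1) - t)^2 \<le> g" by (simp only: a_def)
qed

lemma decomp_last:
  assumes nu: "\<nu> \<in> prob_vectors (Suc q)" and q: "q \<ge> 1" and mn: "\<And>i. i < Suc q \<Longrightarrow> \<nu> q \<le> \<nu> i"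
  defines "t \<equiv> \<nu> q"
  defines "\<mu> \<equiv> (\<lambda>i. if i < q then \<nu> i / (1 - t) else 0)"
  shows "0 \<le> t" "t \<le> 1/(real q + 1)" "\<mu> \<in> prob_vectors q"
    "KL (Suc q) \<nu> = (1-t) * ln ((real q+1)*((1-t)/real q)) + t * ln ((real q+1)*t) + (1-t) * KL q \<mu>"
    "Dv (Suc q) z \<nu> = (real q * ((1-t)/real q) powr z + t powr z - (real q+1) * (1/(real q+1)) powr z)
        + (1-t) powr z * Dv q z \<mu>"
proof -
  have nn: "\<And>i. i < Suc q \<Longrightarrow> 0 \<le> \<nu> i" using nu by (simp add: prob_vectors_def)
  have s1: "(\<Sum>i<Suc q. \<nu> i) = 1" using nu by (simp add: prob_vectors_def)
  then have s2: "(\<Sum>i<q. \<nu> i) = 1 - t" by (simp add: t_def)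
  show t0: "0 \<le> t" using nn[of q] by (simp add: t_def)
  have "(\<Sum>i<Suc q. t) \<le> (\<Sum>i<Suc q. \<nu> i)" using mn by (intro sum_mono) (auto simp: t_def)
  then have "(real q + 1) * t \<le> 1" using s1 by (simp add: algebra_simps)
  then show tle: "t \<le> 1/(real q + 1)" by (simp add: field_simps)
  have "1/(real q + 1) < 1" using q by simp
  then have t1: "t < 1" using tle by linarith
  have qr: "real q > 0" using q by simp
  have sq: "real (Suc q) = real q + 1" by simp
  have nu_mu: "\<nu> i = (1-t) * \<mu> i" if "i < q" for i using that t1 by (simp add: \<mu>_def)
  have mu_nn: "0 \<le> \<mu> i" for i using nn t1 by (auto simp: \<mu>_def)
  have smu: "(\<Sum>i<q. \<mu> i) = 1"
  proof -
    have "(\<Sum>i<q. \<mu> i) = (\<Sum>i<q. \<nu> i / (1-t))" by (simp add: \<mu>_def)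
    also have "\<dots> = (\<Sum>i<q. \<nu> i) / (1-t)" by (simp add: sum_divide_distrib)
    finally show ?thesis using s2 t1 by simp
  qed
  show "\<mu> \<in> prob_vectors q" unfolding prob_vectors_def
  proof (intro CollectI conjI allI impI)
    fix i assume "i < q" then show "0 \<le> \<mu> i" using mu_nn by simp
  next
    fix i assume "q \<le> i" then show "\<mu> i = 0" by (simp add: \<mu>_def)
  qed (rule smu)
  define c where "c = (real q+1)*((1-t)/real q)"
  have c0: "c > 0" using t1 qr by (simp add: c_def)
  have termq: "\<nu> i * ln ((real q + 1) * \<nu> i) = (1-t) * ln c * \<mu> i + (1-t) * (\<mu> i * ln (real q * \<mu> i))"
    if "i < q" for i
  proof (cases "\<mu> i = 0")
    case True then show ?thesis using nu_mu[OF that] by simp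
  next
    case False
    then have mp: "\<mu> i > 0" using mu_nn[of i] by simp
    have "(real q + 1) * \<nu> i = c * (real q * \<mu> i)" using nu_mu[OF that] qr by (simp add: c_def)
    then have "ln ((real q + 1) * \<nu> i) = ln c + ln (real q * \<mu> i)" using c0 mp qr by (simp add: ln_mult)
    then have "\<nu> i * ln ((real q + 1) * \<nu> i) = \<nu> i * (ln c + ln (real q * \<mu> i))" by simp
    also have "\<dots> = ((1-t) * \<mu> i) * (ln c + ln (real q * \<mu> i))" using nu_mu[OF that] by simp
    finally show ?thesis by (simp add: algebra_simps)
  qed
  have "KL (Suc q) \<nu> = (\<Sum>i<q. \<nu> i * ln ((real q + 1) * \<nu> i)) + t * ln ((real q+1)*t)"
    unfolding KL_def sq by (simp add: t_def)
  also have "(\<Sum>i<q. \<nu> i * ln ((real q + 1) * \<nu> i)) = (\<Sum>i<q. (1-t) * ln c * \<mu> i + (1-t) * (\<mu> i * ln (real q * \<mu> i)))"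
    using termq by (intro sum.cong) auto
  also have "\<dots> = (1-t) * ln c * (\<Sum>i<q. \<mu> i) + (1-t) * KL q \<mu>"
    unfolding KL_def by (simp add: sum.distrib sum_distrib_left)
  finally show "KL (Suc q) \<nu> = (1-t) * ln ((real q+1)*((1-t)/real q)) + t * ln ((real q+1)*t) + (1-t) * KL q \<mu>"
    using smu by (simp add: c_def)
  have pw: "\<nu> i powr z = (1-t) powr z * \<mu> i powr z" if "i < q" for i
    using nu_mu[OF that] t1 mu_nn[of i] by (simp add: powr_mult)
  have "Dv (Suc q) z \<nu> = (\<Sum>i<q. \<nu> i powr z) + t powr z - (real q + 1) * (1/(real q+1)) powr z"
    unfolding Dv_def sq by (simp add: t_def)
  also have "(\<Sum>i<q. \<nu> i powr z) = (1-t) powr z * (\<Sum>i<q. \<mu> i powr z)"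
    using pw by (simp add: sum_distrib_left)
  finally have D1: "Dv (Suc q) z \<nu> = (1-t) powr z * (\<Sum>i<q. \<mu> i powr z) + t powr z - (real q + 1) * (1/(real q+1)) powr z" .
  have e: "(1-t) powr z * (real q * (1/real q) powr z) = real q * ((1-t)/real q) powr z"
    using t1 qr by (simp add: powr_divide)
  show "Dv (Suc q) z \<nu> = (real q * ((1-t)/real q) powr z + t powr z - (real q+1) * (1/(real q+1)) powr z)
        + (1-t) powr z * Dv q z \<mu>"
  proof -
    have D2: "(1-t) powr z * Dv q z \<mu> = (1-t) powr z * (\<Sum>i<q. \<mu> i powr z) - real q * ((1-t)/real q) powr z"
      unfolding Dv_def right_diff_distrib e ..
    show ?thesis using D1 D2 by linarith
  qed
qed

lemma Dv_le1:
  assumes "\<nu> \<in> prob_vectors q" "q > 0" "z \<ge> 2"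
  shows "Dv q z \<nu> \<le> 1"
proof -
  have "(\<Sum>i<q. \<nu> i powr z) \<le> (\<Sum>i<q. \<nu> i)"
  proof (rule sum_mono)
    fix i assume i: "i \<in> {..<q}"
    have "\<nu> i powr z \<le> \<nu> i powr 1" using pv_le1[OF assms(1)] i assms(3) by (intro powr_mono') auto
    then show "\<nu> i powr z \<le> \<nu> i" using pv_le1[OF assms(1)] i by (cases "\<nu> i = 0") auto
  qed
  moreover have "0 \<le> real q * (1/real q) powr z" by simp
  moreover have "(\<Sum>i<q. \<nu> i) = 1" using assms(1) unfolding prob_vectors_def by auto
  ultimately show ?thesis unfolding Dv_def by linarith
qed

definition eps_q :: "nat \<Rightarrow> real \<Rightarrow> real" where
  "eps_q q z = min (min ((Lq q z - Bq q z)/2) (Bq q z * (1/(real q+1))/2))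
      ((Lq q z - Bq q z) * (z*(z-1)/(2*real q) * (1/(real q+1)) powr (z-2)) * (1/(real q+1))^2 / 8)"

lemma eps_q_pos: assumes "q \<ge> 2" "z \<ge> 2" shows "eps_q q z > 0"
proof -
  have "Lq q z - Bq q z > 0" using Bq_lt_L[OF assms] by simp
  moreover have "Bq q z > 0" using Bq_pos[OF assms] by simp
  moreover have "z*(z-1)/(2*real q) * (1/(real q+1)) powr (z-2) > 0" using assms by simp
  ultimately show ?thesis using assms unfolding eps_q_def
    by (simp del: divide_const_simps; intro divide_pos_pos mult_pos_pos; simp)
qed

lemma gap_last:
  assumes q: "q \<ge> 2" and z: "z \<ge> 2" and nu: "\<nu> \<in> prob_vectors (Suc q)"
    and mn: "\<And>i. i < Suc q \<Longrightarrow> \<nu> q \<le> \<nu> i"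
  shows "(Bq q z + eps_q q z) * Dv (Suc q) z \<nu> \<le> z * KL (Suc q) \<nu>"
proof -
  define Q where "Q = real q"
  have Q: "Q \<ge> 1" using q by (simp add: Q_def)
  define t where "t = \<nu> q"
  define \<mu> where "\<mu> = (\<lambda>i. if i < q then \<nu> i / (1 - t) else 0)"
  have q1: "q \<ge> 1" using q by simp
  note dc0 = decomp_last[OF nu q1 mn]
  have dc3: "\<mu> \<in> prob_vectors q" unfolding \<mu>_def t_def by (rule dc0(3))
  define h where "h = (1-t) * ln ((Q+1)*((1-t)/Q)) + t * ln ((Q+1)*t)"
  define g where "g = Q * ((1-t)/Q) powr z + t powr z - (Q+1) * (1/(Q+1)) powr z"
  define K where "K = KL q \<mu>"
  define D where "D = Dv q z \<mu>"
  define B where "B = Bq q z"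
  define L where "L = Lq q z"
  define \<epsilon> where "\<epsilon> = eps_q q z"
  define a0 where "a0 = 1/(Q+1)"
  define \<kappa> where "\<kappa> = z*(z-1)/(2*Q) * a0 powr (z-2)"
  define d where "d = a0 - t"
  have KLe: "KL (Suc q) \<nu> = h + (1-t) * K" unfolding h_def K_def Q_def t_def \<mu>_def by (rule dc0(4))
  have Dve: "Dv (Suc q) z \<nu> = g + (1-t) powr z * D" unfolding g_def D_def Q_def t_def \<mu>_def by (rule dc0(5))
  have t0: "0 \<le> t" and ta: "t \<le> a0" using dc0(1,2) by (auto simp: a0_def t_def Q_def)
  have "a0 < 1" using Q by (simp add: a0_def)
  then have t1: "t < 1" using ta by linarith
  have hb: "(Q+2)/2 * d^2 \<le> h" unfolding h_def d_def a0_def by (rule h_bound[OF Q t0 ta[unfolded a0_def]])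
  have gu: "g \<le> z*(z-1)/2 * (1/Q) powr (z-2) * ((Q+1)/Q) * d^2"
    unfolding g_def d_def a0_def by (rule g_bounds(1)[OF Q z t0 ta[unfolded a0_def]])
  have gl: "\<kappa> * d^2 \<le> g"
    unfolding g_def d_def a0_def \<kappa>_def by (rule g_bounds(2)[OF Q z t0 ta[unfolded a0_def]])
  have q0: "q > 0" using q by simp
  have BK: "B * D \<le> z * K" unfolding B_def D_def K_def by (rule Bq_mult[OF q z dc3])
  have D0: "0 \<le> D" unfolding D_def by (rule Dv_nonneg[OF dc3 q0 z])
  have D1: "D \<le> 1" unfolding D_def by (rule Dv_le1[OF dc3 q0 z])
  have B0: "B > 0" using Bq_pos[OF q z] by (simp add: B_def)
  have LB: "B < L" using Bq_lt_L[OF q z] by (simp add: B_def L_def)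
  have k0: "\<kappa> > 0" using z Q by (simp add: \<kappa>_def a0_def)
  have e0: "\<epsilon> > 0" using eps_q_pos[OF q z] by (simp add: \<epsilon>_def)
  have e1: "\<epsilon> \<le> (L-B)/2" and e2: "\<epsilon> \<le> B * a0/2" and e3: "\<epsilon> \<le> (L-B) * \<kappa> * a0^2/8"
    unfolding \<epsilon>_def eps_q_def L_def B_def \<kappa>_def a0_def Q_def
    by (meson min.cobounded1 min.cobounded2 order_trans)+
  have Lg: "L * g \<le> z * h"
  proof -
    have L0: "L > 0" using LB B0 by simp
    have "L * g \<le> L * (z*(z-1)/2 * (1/Q) powr (z-2) * ((Q+1)/Q) * d^2)"
      using gu L0 by (intro mult_left_mono) auto
    also have "\<dots> = z * ((Q+2)/2 * d^2)"
    proof -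
      have L': "L = Q powr (z-1) * (Q+2) / ((z-1)*(Q+1))" by (simp add: L_def Lq_def Q_def)
      have pd: "(1/Q) powr (z-2) = 1 / Q powr (z-2)" using Q by (simp add: powr_divide)
      have e: "Q powr (z-1) = Q * Q powr (z-2)"
      proof -
        have "Q powr (z-1) = Q powr (1 + (z-2))" by simp
        also have "\<dots> = Q powr 1 * Q powr (z-2)" by (rule powr_add)
        finally show ?thesis using Q by simp
      qed
      have nz: "z - 1 \<noteq> 0" "Q + 1 \<noteq> 0" "Q powr (z-2) \<noteq> 0" "Q \<noteq> 0" using z Q by auto
      have gen: "\<And>A w P C. w \<noteq> 0 \<Longrightarrow> P \<noteq> 0 \<Longrightarrow> C \<noteq> 0 \<Longrightarrow> Q \<noteq> 0 \<Longrightarrow>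
          (Q * C) * (Q+2) / (w * P) * (z*w/2 * (1/C) * (P/Q) * A) = z * ((Q+2)/2 * A)"
        by (simp add: field_simps)
      show ?thesis unfolding L' pd e using gen[OF nz] by (simp add: mult.assoc)
    qed
    also have "\<dots> \<le> z * h" using hb z by (intro mult_left_mono) auto
    finally show ?thesis .
  qed
  have pz: "(1-t) powr z \<le> (1-t)^2"
  proof -
    have "(1-t) powr z \<le> (1-t) powr 2" using t0 t1 z by (intro powr_mono') auto
    also have "\<dots> = (1-t)^2" using t1 by (simp add: powr_numeral)
    finally show ?thesis .
  qed
  define W where "W = (1-t) * D"
  have W0: "0 \<le> W" "W \<le> 1" using D0 D1 t0 t1 by (auto simp: W_def mult_le_one)
  have main: "0 \<le> (L - B - \<epsilon>) * g + W * (B*t - \<epsilon>)"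
  proof (cases "B * t \<ge> \<epsilon>")
    case True
    have "0 \<le> (L - B - \<epsilon>) * g" using e1 LB gl k0 e0
      by (intro mult_nonneg_nonneg) (auto intro: order_trans[OF _ gl])
    moreover have "0 \<le> W * (B*t - \<epsilon>)" using True W0 by simp
    ultimately show ?thesis by simp
  next
    case False
    then have "t < \<epsilon> / B" using B0 by (simp add: field_simps)
    moreover have "\<epsilon> / B \<le> a0/2" using e2 B0 by (subst pos_divide_le_eq) (auto simp: algebra_simps)
    ultimately have "t < a0/2" by linarith
    then have dd: "a0/2 \<le> d" by (simp add: d_def)
    have a00: "a0 > 0" using Q by (simp add: a0_def)
    have "(a0/2)^2 \<le> d^2" using dd a00 by (intro power_mono) auto
    then have "\<kappa> * (a0/2)^2 \<le> \<kappa> * d^2" using k0 by (intro mult_left_mono) auto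
    then have "\<kappa> * (a0/2)^2 \<le> g" using gl by linarith
    then have "(L-B)/2 * (\<kappa> * (a0/2)^2) \<le> (L - B - \<epsilon>) * g"
      using e1 LB k0 by (intro mult_mono) auto
    moreover have "(L-B)/2 * (\<kappa> * (a0/2)^2) = (L-B) * \<kappa> * a0^2/8" by (simp add: power2_eq_square)
    moreover have "W * (B*t - \<epsilon>) \<ge> -\<epsilon>"
    proof -
      have "W * (\<epsilon> - B*t) \<le> 1 * (\<epsilon> - B*t)" using W0 False by (intro mult_right_mono) auto
      moreover have "\<epsilon> - B*t \<le> \<epsilon>" using B0 t0 by simp
      ultimately show ?thesis by (simp add: algebra_simps)
    qed
    ultimately show ?thesis using e3 by linarith
  qed
  have "(B + \<epsilon>) * Dv (Suc q) z \<nu> = (B + \<epsilon>) * g + (B + \<epsilon>) * ((1-t) powr z * D)" by (simp add: Dve algebra_simps)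
  also have "(B + \<epsilon>) * ((1-t) powr z * D) \<le> (B + \<epsilon>) * ((1-t)^2 * D)"
    using pz D0 B0 e0 by (intro mult_left_mono mult_right_mono) auto
  also have "(B + \<epsilon>) * ((1-t)^2 * D) = W * (B - B*t + \<epsilon> - \<epsilon>*t)" by (simp add: W_def power2_eq_square algebra_simps)
  finally have A1: "(B + \<epsilon>) * Dv (Suc q) z \<nu> \<le> (B + \<epsilon>) * g + W * (B - B*t + \<epsilon> - \<epsilon>*t)" by simp
  have A2: "W * B \<le> (1-t) * (z * K)"
  proof -
    have "(1-t) * (B*D) \<le> (1-t)*(z*K)" using BK t1 by (intro mult_left_mono) auto
    moreover have "W * B = (1-t) * (B*D)" by (simp add: W_def algebra_simps)
    ultimately show ?thesis by linarith
  qed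
  have A3: "W * (\<epsilon>*t) \<ge> 0" using W0 e0 t0 by simp
  have "z * KL (Suc q) \<nu> = z * h + (1-t) * (z*K)" by (simp add: KLe algebra_simps)
  moreover have "(B + \<epsilon>) * g + W * (B - B*t + \<epsilon> - \<epsilon>*t) = L*g - ((L - B - \<epsilon>) * g + W * (B*t - \<epsilon>)) + W*B - W*(\<epsilon>*t)"
    by (simp add: algebra_simps)
  ultimately show ?thesis using A1 A2 A3 Lg main unfolding B_def[symmetric] \<epsilon>_def[symmetric] by linarith
qed

lemma perm_inv:
  assumes nu: "\<nu> \<in> prob_vectors n" and j: "j < n" and k: "k < n"
  defines "\<sigma> \<equiv> (\<lambda>i. if i = j then k else if i = k then j else i)"
  shows "(\<nu> \<circ> \<sigma>) \<in> prob_vectors n" "KL n (\<nu> \<circ> \<sigma>) = KL n \<nu>" "Dv n z (\<nu> \<circ> \<sigma>) = Dv n z \<nu>"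
proof -
  have bij: "bij_betw \<sigma> {..<n} {..<n}"
    unfolding bij_betw_def inj_on_def \<sigma>_def using j k by (auto simp: image_iff)
  have S: "\<And>g::real\<Rightarrow>real. (\<Sum>i<n. g (\<nu> (\<sigma> i))) = (\<Sum>i<n. g (\<nu> i))"
  proof -
    fix g :: "real \<Rightarrow> real"
    show "(\<Sum>i<n. g (\<nu> (\<sigma> i))) = (\<Sum>i<n. g (\<nu> i))"
      using sum.reindex_bij_betw[OF bij, of "\<lambda>i. g (\<nu> i)"] by simp
  qed
  have "(\<Sum>i<n. (\<nu> \<circ> \<sigma>) i) = 1" using S[of "\<lambda>x. x"] nu by (simp add: prob_vectors_def)
  moreover have "\<forall>i<n. 0 \<le> (\<nu> \<circ> \<sigma>) i" using nu j k by (auto simp: prob_vectors_def \<sigma>_def)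
  moreover have "\<forall>i\<ge>n. (\<nu> \<circ> \<sigma>) i = 0" using nu j k by (auto simp: prob_vectors_def \<sigma>_def)
  ultimately show "(\<nu> \<circ> \<sigma>) \<in> prob_vectors n" by (simp add: prob_vectors_def)
  show "KL n (\<nu> \<circ> \<sigma>) = KL n \<nu>" unfolding KL_def using S[of "\<lambda>x. x * ln (real n * x)"] by simp
  show "Dv n z (\<nu> \<circ> \<sigma>) = Dv n z \<nu>" unfolding Dv_def using S[of "\<lambda>x. x powr z"] by simp
qed

lemma gap_all:
  assumes q: "q \<ge> 2" and z: "z \<ge> 2" and nu: "\<nu> \<in> prob_vectors (Suc q)"
  shows "(Bq q z + eps_q q z) * Dv (Suc q) z \<nu> \<le> z * KL (Suc q) \<nu>"
proof -
  define m where "m = Min (\<nu> ` {..<Suc q})"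
  have "m \<in> \<nu> ` {..<Suc q}" unfolding m_def by (intro Min_in) auto
  then obtain j where j: "j < Suc q" "\<nu> j = m" by auto
  have mle: "\<And>i. i < Suc q \<Longrightarrow> \<nu> j \<le> \<nu> i" unfolding j(2) m_def by (intro Min_le) auto
  define \<sigma> where "\<sigma> = (\<lambda>i. if i = j then q else if i = q then j else i)"
  note pi1 = perm_inv(1)[OF nu j(1) lessI, folded \<sigma>_def]
  note pi2 = perm_inv(2)[OF nu j(1) lessI, folded \<sigma>_def]
  note pi3 = perm_inv(3)[where z=z, OF nu j(1) lessI, folded \<sigma>_def]
  have mn: "\<And>i. i < Suc q \<Longrightarrow> (\<nu> \<circ> \<sigma>) q \<le> (\<nu> \<circ> \<sigma>) i"
  proof -
    fix i assume i: "i < Suc q"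
    have "(\<nu> \<circ> \<sigma>) q = \<nu> j" by (simp add: \<sigma>_def)
    moreover have "\<sigma> i < Suc q" using i j by (auto simp: \<sigma>_def)
    ultimately show "(\<nu> \<circ> \<sigma>) q \<le> (\<nu> \<circ> \<sigma>) i" using mle by simp
  qed
  from gap_last[OF q z pi1 mn] show ?thesis unfolding pi2 pi3 .
qed

lemma Bq_step:
  assumes q: "q \<ge> 2" and z: "z \<ge> 2"
  shows "Bq q z < Bq (Suc q) z"
proof -
  have q': "Suc q \<ge> 2" using q by simp
  have "Bq q z + eps_q q z \<le> Bq (Suc q) z" unfolding Bq_def[of "Suc q"]
  proof (rule cInf_greatest)
    show "Rset (Suc q) z \<noteq> {}" by (rule Rset_ne[OF q' z])
    fix x assume "x \<in> Rset (Suc q) z"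
    then obtain \<nu> where \<nu>: "\<nu> \<in> prob_vectors (Suc q)" "Dv (Suc q) z \<nu> > 0" "x = z * KL (Suc q) \<nu> / Dv (Suc q) z \<nu>"
      unfolding Rset_def by blast
    show "Bq q z + eps_q q z \<le> x" unfolding \<nu>(3)
      by (subst pos_le_divide_eq[OF \<nu>(2)]) (rule gap_all[OF q z \<nu>(1)])
  qed
  then show ?thesis using eps_q_pos[OF q z] by linarith
qed

lemma Bq_mono_aux:
  assumes q: "q \<ge> 2" and z: "z \<ge> 2"
  shows "Bq q z < Bq (q + Suc d) z"
proof (induction d)
  case 0 then show ?case using Bq_step[OF q z] by simp
next
  case (Suc d)
  have "Bq (q + Suc d) z < Bq (Suc (q + Suc d)) z" using q z by (intro Bq_step) auto
  then show ?case using Suc by simp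
qed

theorem proposition2p2:
  fixes z :: real
  assumes "z \<ge> 2"
  shows "strict_mono_on {2..} (\<lambda>q::nat. beta_c q z)"
proof (rule strict_mono_onI)
  fix r s :: nat assume r: "r \<in> {2..}" and s: "s \<in> {2..}" and rs: "r < s"
  obtain d where d: "s = r + Suc d" using less_imp_Suc_add[OF rs] by auto
  have "Bq r z < Bq s z" unfolding d using r assms by (intro Bq_mono_aux) auto
  moreover have "beta_c r z = Bq r z" using r assms by (intro beta_c_eq) auto
  moreover have "beta_c s z = Bq s z" using s assms by (intro beta_c_eq) auto
  ultimately show "beta_c r z < beta_c s z" by simp
qed

end
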